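(* Let $d\ge 0$ be an integer and $r,s\in(-1,\infty)$ with $r\neq0$ and $r+s=0$. Let $\alpha=-d-1$, $\beta=r$, $\gamma=\frac{r-d-1}{2}$, $\delta=-\frac{r+d}{2}-1$ (so $N=d$), and for $0\le i\le d$ let $R_i(y)$ be the Racah polynomial $$R_i(y)=\sum_{k=0}^{i}\frac{(-i)_k(i+\alpha+\beta+1)_k}{(\alpha+1)_k(\beta+\delta+1)_k(\gamma+1)_k\,k!}\prod_{l=0}^{k-1}\bigl(l(l+\gamma+\delta+1)-y\bigr).$$ Then: (a) for every $0\le i\le d$, $u_i(4y+d(d+1))=R_i(y)$ as polynomials in $y$; (b) for $0\le j\le d$ the points $\bar\theta_j:=4j(j+\gamma+\delta+1)+d(d+1)=(d-2j)(d-2j+1)$ satisfy $\bar\theta_j=\theta_{2j}$ if $0\le j\le\lfloor d/2\rfloor$ and $\bar\theta_j=\theta_{2(d-j)+1}$ if $\lfloor d/2\rfloor<j\le d$, so $\{\bar\theta_j\}_{j=0}^d=\{\theta_j\}_{j=0}^d$; (c) the Racah weights $\bar k^*_j$ satisfy $\bar k^*_j=k^*_{2j}$ if $0\le j\le\lfloor d/2\rfloor$ and $\bar k^*_j=k^*_{2(d-j)+1}$ if $\lfloor d/2\rfloor<j\le d$. In other words, the dual Hahn polynomials $u_0,\dots,u_d$ are also Racah polynomials, orthogonal on the same points $\theta_0,\dots,\theta_d$ with the same weights $k^*_0,\dots,k^*_d$.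
   Context: Write $(x)_i=x(x+1)\cdots(x+i-1)$, $(x)_0=1$, and ${}_3F_2\left(\genfrac..{0pt}{}{a_1,a_2,a_3}{b_1,b_2}\,\middle|\,1\right)=\sum_{n\ge0}\frac{(a_1)_n(a_2)_n(a_3)_n}{(b_1)_n(b_2)_n n!}$ (a terminating sum here). For $0\le i\le d$ put $\theta_i=(d-i)(d-i+r+s+1)$ (these are distinct). Let $u_0,\dots,u_d$ be the unique real polynomials of degree at most $d$ with $u_i(\theta_j)={}_3F_2\left(\genfrac..{0pt}{}{-i,-j,j-r-s-2d-1}{-s-d,-d}\,\middle|\,1\right)$ for $0\le i,j\le d$ (the dual Hahn polynomials). Put $b^*_i=\frac{(d-i)(i-d-s)(2d-2i+r+s+2)_i}{(2d-2i+r+s)_{i+1}}$ ($0\le i\le d-1$), $c^*_i=\frac{i(i-d-r-1)(d-i+r+s+1)_{d-i}}{(d-i+r+s+2)_{d-i+1}}$ ($1\le i\le d$), and $k^*_i=\frac{b^*_0\cdots b^*_{i-1}}{c^*_1\cdots c^*_i}$ ($0\le i\le d$); the $u_i$ are orthogonal with respect to $\langle f,g\rangle=\sum_h f(\theta_h)g(\theta_h)k^*_h$. The Racah weights are defined by $\bar b^*_i=\frac{(d-i)(2d-2i+1)(d-2i-r-1)(d-2i-r)}{2(2d-4i-1)(2d-4i+1)}$ ($0\le i\le d-1$), $\bar c^*_i=\frac{i(2i-1)(d-2i+r+1)(d-2i+r+2)}{2(2d-4i+1)(2d-4i+3)}$ ($1\le i\le d$), and $\bar k^*_j=\frac{\bar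 b^*_0\cdots\bar b^*_{j-1}}{\bar c^*_1\cdots\bar c^*_j}$ ($0\le j\le d$). *)

theory Defs
  imports "HOL-Computational_Algebra.Polynomial"
begin

text \<open>Terminating generalized hypergeometric series 3F2 at argument 1, summed up to
  index M (all later terms vanish because an upper parameter is -i, and we use M = i).\<close>
definition hyp3F2 :: "nat \<Rightarrow> real \<Rightarrow> real \<Rightarrow> real \<Rightarrow> real \<Rightarrow> real \<Rightarrow> real" where
  "hyp3F2 M a1 a2 a3 b1 b2 =
     (\<Sum>n\<le>M. pochhammer a1 n * pochhammer a2 n * pochhammer a3 n
              / (pochhammer b1 n * pochhammer b2 n * fact n))"

definition theta :: "nat \<Rightarrow> real \<Rightarrow> real \<Rightarrow> nat \<Rightarrow> real" where
  "theta d r s i = real (d - i) * (real (d - i) + r + s + 1)"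

definition dual_hahn_val :: "nat \<Rightarrow> real \<Rightarrow> real \<Rightarrow> nat \<Rightarrow> nat \<Rightarrow> real" where
  "dual_hahn_val d r s i j =
     hyp3F2 i (- real i) (- real j) (real j - r - s - 2 * real d - 1) (- s - real d) (- real d)"

definition dual_hahn :: "nat \<Rightarrow> real \<Rightarrow> real \<Rightarrow> nat \<Rightarrow> real poly" where
  "dual_hahn d r s i = (THE p. degree p \<le> d \<and>
      (\<forall>j\<le>d. poly p (theta d r s j) = dual_hahn_val d r s i j))"

definition bstar :: "nat \<Rightarrow> real \<Rightarrow> real \<Rightarrow> nat \<Rightarrow> real" where
  "bstar d r s i = real (d - i) * (real i - real d - s)
      * pochhammer (2 * real d - 2 * real i + r + s + 2) i
      / pochhammer (2 * real d - 2 * real i + r + s) (i + 1)"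

definition cstar :: "nat \<Rightarrow> real \<Rightarrow> real \<Rightarrow> nat \<Rightarrow> real" where
  "cstar d r s i = real i * (real i - real d - r - 1)
      * pochhammer (real d - real i + r + s + 1) (d - i)
      / pochhammer (real d - real i + r + s + 2) (d - i + 1)"

definition kstar :: "nat \<Rightarrow> real \<Rightarrow> real \<Rightarrow> nat \<Rightarrow> real" where
  "kstar d r s i = (\<Prod>l<i. bstar d r s l) / (\<Prod>l\<in>{1..i}. cstar d r s l)"

definition bbar :: "nat \<Rightarrow> real \<Rightarrow> nat \<Rightarrow> real" where
  "bbar d r i = real (d - i) * (2 * real d - 2 * real i + 1)
      * (real d - 2 * real i - r - 1) * (real d - 2 * real i - r)
      / (2 * (2 * real d - 4 * real i - 1) * (2 * real d - 4 * real i + 1))"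

definition cbar :: "nat \<Rightarrow> real \<Rightarrow> nat \<Rightarrow> real" where
  "cbar d r i = real i * (2 * real i - 1)
      * (real d - 2 * real i + r + 1) * (real d - 2 * real i + r + 2)
      / (2 * (2 * real d - 4 * real i + 1) * (2 * real d - 4 * real i + 3))"

definition kbar :: "nat \<Rightarrow> real \<Rightarrow> nat \<Rightarrow> real" where
  "kbar d r j = (\<Prod>l<j. bbar d r l) / (\<Prod>l\<in>{1..j}. cbar d r l)"

definition racah_poly :: "real \<Rightarrow> real \<Rightarrow> real \<Rightarrow> real \<Rightarrow> nat \<Rightarrow> real poly" where
  "racah_poly \<alpha> \<beta> \<gamma> \<delta> i =
     (\<Sum>k\<le>i. smult (pochhammer (- real i) k * pochhammer (real i + \<alpha> + \<beta> + 1) k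
                 / (pochhammer (\<alpha> + 1) k * pochhammer (\<beta> + \<delta> + 1) k
                    * pochhammer (\<gamma> + 1) k * fact k))
               (\<Prod>l<k. [: real l * (real l + \<gamma> + \<delta> + 1), -1 :]))"

end

theory Submission
  imports Defs
begin


lemma r_not_int:
  fixes r :: real assumes "-1 < r" "r < 1" "r \<noteq> 0"
  shows "r + of_int k \<noteq> 0"
proof
  assume h: "r + of_int k = 0"
  hence "r = - of_int k" by simp
  with assms have "(of_int (-1)::real) < of_int (-k)" "(of_int (-k)::real) < of_int 1" by auto
  hence "-1 < -k" "-k < 1" by (simp_all only: of_int_less_iff)
  hence "k = 0" by linarith
  with h assms show False by simp
qed

lemma odd_nz: "(of_int (2 * k + 1) :: real) \<noteq> 0"
proof
  assume "(of_int (2 * k + 1) :: real) = 0"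
  hence "2 * k + 1 = 0" by (simp only: of_int_eq_0_iff)
  thus False by presburger
qed

definition bs :: "nat \<Rightarrow> real \<Rightarrow> nat \<Rightarrow> real" where
  "bs d r l = (real l - real d + r) * (2 * real d - real l + 1) / (2 * (2 * real d - 2 * real l + 1))"
definition cs :: "nat \<Rightarrow> real \<Rightarrow> nat \<Rightarrow> real" where
  "cs d r l = real l * (real l - real d - r - 1) / (2 * (2 * real d - 2 * real l + 1))"

lemma poch_shift2:
  fixes a :: real
  shows "pochhammer (a + 2) n * (a * (a + 1)) = pochhammer a (Suc n) * (a + of_nat n + 1)"
proof -
  have "pochhammer a (Suc (Suc n)) = a * ((a + 1) * pochhammer (a + 2) n)"
    by (simp add: pochhammer_rec add.assoc)
  moreover have "pochhammer a (Suc (Suc n)) = (a + of_nat (Suc n)) * pochhammer a (Suc n)"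
    by (rule pochhammer_rec')
  ultimately show ?thesis by (simp add: algebra_simps)
qed

lemma poch_shift1:
  fixes a :: real
  shows "pochhammer a n * (a + of_nat n) = a * pochhammer (a + 1) n"
    and "pochhammer (a + 1) (Suc n) = (a + 1 + of_nat n) * pochhammer (a + 1) n"
proof -
  show "pochhammer a n * (a + of_nat n) = a * pochhammer (a + 1) n"
    using pochhammer_rec[of a n] pochhammer_rec'[of a n] by (simp add: algebra_simps)
  show "pochhammer (a + 1) (Suc n) = (a + 1 + of_nat n) * pochhammer (a + 1) n"
    by (simp add: pochhammer_rec' add.assoc)
qed

lemma cancel_u: fixes u x y z :: real assumes "u \<noteq> 0" shows "u*x*y/(2*u*z) = x*y/(2*z)"
  using assms by simp

lemma bstar_eq:
  assumes "l < d" "r + s = 0"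
  shows "bstar d r s l = bs d r l"
proof -
  define a where "a = 2 * real d - 2 * real l"
  have apos: "a > 0" using assms by (simp add: a_def)
  have sr: "s = - r" using assms by simp
  have arg1: "2 * real d - 2 * real l + r + s + 2 = a + 2" using sr by (simp add: a_def)
  have arg2: "2 * real d - 2 * real l + r + s = a" using sr by (simp add: a_def)
  have pnz: "pochhammer a (Suc l) \<noteq> 0" using apos
    by (simp add: pochhammer_eq_0_iff)
  have key: "pochhammer (a + 2) l = pochhammer a (Suc l) * (a + of_nat l + 1) / (a * (a + 1))"
  proof -
    have nz: "a * (a + 1) \<noteq> 0" using apos by simp
    show ?thesis using poch_shift2[of a l] nz by (simp only: eq_divide_eq) simp
  qed
  have dl: "real (d - l) = real d - real l" using assms by simp
  have "bstar d r s l = (real d - real l) * (real l - real d + r) * (pochhammer a (Suc l) * (a + of_nat l + 1) / (a * (a + 1))) / pochhammer a (Suc l)"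
    unfolding bstar_def arg1 arg2 key dl by (simp add: sr)
  also have "\<dots> = (real d - real l) * (real l - real d + r) * (a + of_nat l + 1) / (a * (a + 1))"
    using pnz by simp
  also have "\<dots> = bs d r l"
  proof -
    define u where "u = real d - real l"
    have u: "u > 0" using assms by (simp add: u_def)
    have a: "a = 2 * u" by (simp add: a_def u_def)
    have e: "2 * real d - real l + 1 = 2 * u + real l + 1" "2 * real d - 2 * real l + 1 = 2 * u + 1" by (simp_all add: u_def)
    have "u * (real l - real d + r) * (2 * u + real l + 1) / (2 * u * (2 * u + 1)) = (real l - real d + r) * (2 * u + real l + 1) / (2 * (2 * u + 1))"
      using u by (simp add: cancel_u)
    thus ?thesis unfolding bs_def a e by (simp add: u_def[symmetric] mult.assoc add.assoc)
  qed
  finally show ?thesis .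
qed

lemma cancel2: fixes P a x b :: real assumes "P \<noteq> 0" "a \<noteq> 0" shows "x * (a * P / b) / (2 * a * P) = x / (2 * b)"
  using assms by (simp add: field_simps)

lemma cstar_eq:
  assumes "l \<le> d" "r + s = 0"
  shows "cstar d r s l = cs d r l"
proof -
  define a where "a = real d - real l + 1"
  define n where "n = d - l"
  have apos: "a > 0" using assms by (simp add: a_def)
  have rn: "real n = real d - real l" using assms by (simp add: n_def)
  have arg1: "real d - real l + r + s + 1 = a" using assms by (simp add: a_def)
  have arg2: "real d - real l + r + s + 2 = a + 1" using assms by (simp add: a_def)
  define P where "P = pochhammer (a + 1) n"
  have pnz: "P \<noteq> 0" using apos unfolding P_def by (simp add: pochhammer_eq_0_iff)
  have an: "a + of_nat n = 2 * real d - 2 * real l + 1" using rn by (simp add: a_def)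
  have annz: "a + of_nat n \<noteq> 0" using an assms by simp
  have k1: "pochhammer a n = a * P / (a + of_nat n)"
    using poch_shift1(1)[of a n] annz unfolding P_def by (simp add: eq_divide_eq)
  have k2: "pochhammer (a + 1) (n + 1) = 2 * a * P"
    using poch_shift1(2)[of a n] unfolding P_def rn by (simp add: a_def algebra_simps)
  have "cstar d r s l = real l * (real l - real d - r - 1) * (a * P / (a + of_nat n)) / (2 * a * P)"
    unfolding cstar_def arg1 arg2 n_def[symmetric] k1 k2 by simp
  also have "\<dots> = real l * (real l - real d - r - 1) / (2 * (a + of_nat n))"
    using pnz apos by (simp add: cancel2)
  also have "\<dots> = cs d r l" unfolding cs_def an by simp
  finally show ?thesis .
qed

lemma frac4:
  fixes a b c e p1 q1 p2 q2 p3 q3 p4 q4 :: real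
  assumes "b \<noteq> 0" "c \<noteq> 0" "e \<noteq> 0" "q1 \<noteq> 0" "p2 \<noteq> 0" "q2 \<noteq> 0" "q3 \<noteq> 0" "p4 \<noteq> 0" "q4 \<noteq> 0"
    and "a * e * q1 * p2 * q3 * p4 = b * c * p1 * q2 * p3 * q4"
  shows "(a/b)/(c/e) = (p1/q1)/(p2/q2) * ((p3/q3)/(p4/q4))"
proof -
  have "(a/b)/(c/e) = (a * e * q1 * p2 * q3 * p4) / (b * c * q1 * p2 * q3 * p4)"
    using assms(1-9) by (simp add: field_simps)
  also have "\<dots> = (b * c * p1 * q2 * p3 * q4) / (b * c * q1 * p2 * q3 * p4)" using assms(10) by simp
  also have "\<dots> = (p1/q1)/(p2/q2) * ((p3/q3)/(p4/q4))"
    using assms(1-9) by (simp add: field_simps)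
  finally show ?thesis .
qed

lemma W1:
  fixes d j :: nat
  assumes "2*j+2 \<le> d" "-1 < r" "r < 1" "r \<noteq> 0"
  shows "bbar d r j / cbar d r (Suc j) = (bs d r (2*j) / cs d r (2*j+1)) * (bs d r (2*j+1) / cs d r (2*j+2))"
proof -
  define D where "D = real d"
  define J where "J = real j"
  have n1: "2*D - 4*J - 1 \<noteq> 0" using odd_nz[of "int d - 2*int j - 1"] by (simp add: D_def J_def)
  have n2: "2*D - 4*J + 1 \<noteq> 0" using odd_nz[of "int d - 2*int j"] by (simp add: D_def J_def)
  have n3: "2*D - 4*J - 3 \<noteq> 0" using odd_nz[of "int d - 2*int j - 2"] by (simp add: D_def J_def)
  have n4: "D - 2*J + r - 1 \<noteq> 0" using r_not_int[OF assms(2-4), of "int d - 2*int j - 1"] by (simp add: D_def J_def algebra_simps)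
  have n5: "D - 2*J + r \<noteq> 0" using r_not_int[OF assms(2-4), of "int d - 2*int j"] by (simp add: D_def J_def algebra_simps)
  have n6: "2*J - D - r \<noteq> 0" using r_not_int[OF assms(2-4), of "int d - 2*int j"] by (simp add: D_def J_def algebra_simps)
  have n7: "2*J + 1 - D - r \<noteq> 0" using r_not_int[OF assms(2-4), of "int d - 2*int j - 1"] by (simp add: D_def J_def algebra_simps)
  have J0: "J \<ge> 0" by (simp add: J_def)
  have e1: "bbar d r j = ((D-J)*(2*D-2*J+1)*(D-2*J-r-1)*(D-2*J-r)) / (2*(2*D-4*J-1)*(2*D-4*J+1))"
    unfolding bbar_def using assms(1) by (simp add: D_def J_def of_nat_diff algebra_simps)
  have e2: "cbar d r (Suc j) = ((J+1)*(2*J+1)*(D-2*J+r-1)*(D-2*J+r)) / (2*(2*D-4*J-3)*(2*D-4*J-1))"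
    unfolding cbar_def by (simp add: D_def J_def algebra_simps)
  have e3: "bs d r (2*j) = ((2*J-D+r)*(2*D-2*J+1)) / (2*(2*D-4*J+1))"
    unfolding bs_def by (simp add: D_def J_def algebra_simps)
  have e4: "cs d r (2*j+1) = ((2*J+1)*(2*J-D-r)) / (2*(2*D-4*J-1))"
    unfolding cs_def by (simp add: D_def J_def algebra_simps)
  have e5: "bs d r (2*j+1) = ((2*J+1-D+r)*(2*D-2*J)) / (2*(2*D-4*J-1))"
    unfolding bs_def by (simp add: D_def J_def algebra_simps)
  have e6: "cs d r (2*j+2) = ((2*J+2)*(2*J+1-D-r)) / (2*(2*D-4*J-3))"
    unfolding cs_def by (simp add: D_def J_def algebra_simps)
  show ?thesis unfolding e1 e2 e3 e4 e5 e6
    apply (rule frac4)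
    using n1 n2 n3 n4 n5 n6 n7 J0 apply simp_all
    by algebra
qed

lemma frac4b:
  fixes a b c e p1 q1 p2 q2 p3 q3 p4 q4 :: real
  assumes "b \<noteq> 0" "c \<noteq> 0" "e \<noteq> 0" "q1 \<noteq> 0" "p2 \<noteq> 0" "q2 \<noteq> 0" "q3 \<noteq> 0" "p4 \<noteq> 0" "q4 \<noteq> 0"
    and "p1 * q2 * p3 * q4 * a * e = q1 * p2 * q3 * p4 * b * c"
  shows "(p1/q1)/(p2/q2) * ((p3/q3)/(p4/q4)) * ((a/b)/(c/e)) = 1"
proof -
  have "(p1/q1)/(p2/q2) * ((p3/q3)/(p4/q4)) * ((a/b)/(c/e)) = (p1 * q2 * p3 * q4 * a * e) / (q1 * p2 * q3 * p4 * b * c)"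
    using assms(1-9) by (simp add: field_simps)
  also have "\<dots> = 1" using assms by simp
  finally show ?thesis .
qed

lemma frac2b:
  fixes a b c e p1 q1 p2 q2 :: real
  assumes "b \<noteq> 0" "c \<noteq> 0" "e \<noteq> 0" "q1 \<noteq> 0" "p2 \<noteq> 0" "q2 \<noteq> 0"
    and "p1 * q2 * a * e = q1 * p2 * b * c"
  shows "(p1/q1)/(p2/q2) * ((a/b)/(c/e)) = 1"
proof -
  have "(p1/q1)/(p2/q2) * ((a/b)/(c/e)) = (p1 * q2 * a * e) / (q1 * p2 * b * c)"
    using assms(1-6) by (simp add: field_simps)
  also have "\<dots> = 1" using assms by simp
  finally show ?thesis .
qed

lemma frac2c:
  fixes a b c e p1 q1 p2 q2 :: real
  assumes "b \<noteq> 0" "c \<noteq> 0" "e \<noteq> 0" "q1 \<noteq> 0" "p2 \<noteq> 0" "q2 \<noteq> 0"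
    and "a * e * q1 * p2 = b * c * p1 * q2"
  shows "(a/b)/(c/e) = (p1/q1)/(p2/q2)"
proof -
  have "(a/b)/(c/e) = (a * e * q1 * p2) / (b * c * q1 * p2)"
    using assms(1-6) by (simp add: field_simps)
  also have "\<dots> = (b * c * p1 * q2) / (b * c * q1 * p2)" using assms(7) by simp
  also have "\<dots> = (p1/q1)/(p2/q2)"
    using assms(1-6) by (simp add: field_simps)
  finally show ?thesis .
qed

lemma W2:
  fixes d j :: nat
  assumes "j + 1 \<le> d" "d < 2*j" "-1 < r" "r < 1" "r \<noteq> 0" and idef: "i = 2*(d-j-1)+1"
  shows "(bs d r i / cs d r (Suc i)) * (bs d r (Suc i) / cs d r (Suc (Suc i)))
         * (bbar d r j / cbar d r (Suc j)) = 1"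
proof -
  define D where "D = real d"
  define J where "J = real j"
  have n1: "2*D - 4*J - 1 \<noteq> 0" using odd_nz[of "int d - 2*int j - 1"] by (simp add: D_def J_def)
  have n2: "2*D - 4*J + 1 \<noteq> 0" using odd_nz[of "int d - 2*int j"] by (simp add: D_def J_def)
  have n3: "2*D - 4*J - 3 \<noteq> 0" using odd_nz[of "int d - 2*int j - 2"] by (simp add: D_def J_def)
  have n4: "D - 2*J + r - 1 \<noteq> 0" using r_not_int[OF assms(3-5), of "int d - 2*int j - 1"] by (simp add: D_def J_def algebra_simps)
  have n5: "D - 2*J + r \<noteq> 0" using r_not_int[OF assms(3-5), of "int d - 2*int j"] by (simp add: D_def J_def algebra_simps)
  have n6: "D - 2*J - r \<noteq> 0" using r_not_int[OF assms(3-5), of "2*int j - int d"] by (simp add: D_def J_def algebra_simps)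
  have n7: "D - 2*J - r - 1 \<noteq> 0" using r_not_int[OF assms(3-5), of "2*int j + 1 - int d"] by (simp add: D_def J_def algebra_simps)
  have n8: "4*J - 2*D + 3 \<noteq> 0" using odd_nz[of "2*int j - int d + 1"] by (simp add: D_def J_def algebra_simps)
  have n9: "4*J - 2*D + 1 \<noteq> 0" using odd_nz[of "2*int j - int d"] by (simp add: D_def J_def algebra_simps)
  have n10: "4*J - 2*D - 1 \<noteq> 0" using odd_nz[of "2*int j - int d - 1"] by (simp add: D_def J_def algebra_simps)
  have DJ: "D - J \<ge> 1" using assms(1) by (simp add: D_def J_def)
  have J0: "J \<ge> 0" by (simp add: J_def)
  have i1: "real i = 2*D - 2*J - 1" "real (Suc i) = 2*D - 2*J" "real (Suc (Suc i)) = 2*D - 2*J + 1"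
    using assms(1) by (simp_all add: idef D_def J_def of_nat_diff)
  have e1: "bbar d r j = ((D-J)*(2*D-2*J+1)*(D-2*J-r-1)*(D-2*J-r)) / (2*(2*D-4*J-1)*(2*D-4*J+1))"
    unfolding bbar_def using assms(1) by (simp add: D_def J_def of_nat_diff algebra_simps)
  have e2: "cbar d r (Suc j) = ((J+1)*(2*J+1)*(D-2*J+r-1)*(D-2*J+r)) / (2*(2*D-4*J-3)*(2*D-4*J-1))"
    unfolding cbar_def by (simp add: D_def J_def algebra_simps)
  have e3: "bs d r i = ((D-2*J-1+r)*(2*J+2)) / (2*(4*J-2*D+3))"
    unfolding bs_def i1 by (simp add: D_def J_def algebra_simps)
  have e4: "cs d r (Suc i) = ((2*D-2*J)*(D-2*J-r-1)) / (2*(4*J-2*D+1))"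
    unfolding cs_def i1 by (simp add: D_def J_def algebra_simps)
  have e5: "bs d r (Suc i) = ((D-2*J+r)*(2*J+1)) / (2*(4*J-2*D+1))"
    unfolding bs_def i1 by (simp add: D_def J_def algebra_simps)
  have e6: "cs d r (Suc (Suc i)) = ((2*D-2*J+1)*(D-2*J-r)) / (2*(4*J-2*D-1))"
    unfolding cs_def i1 by (simp add: D_def J_def algebra_simps)
  show ?thesis unfolding e1 e2 e3 e4 e5 e6
    apply (rule frac4b)
    using n1 n2 n3 n4 n5 n6 n7 n8 n9 n10 J0 DJ apply simp_all
    by algebra
qed

lemma W3:
  fixes d m :: nat
  assumes "d = 2*m" "m \<ge> 1" "-1 < r" "r < 1" "r \<noteq> 0"
  shows "(bs d r (d-1) / cs d r d) * (bbar d r m / cbar d r (Suc m)) = 1"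
proof -
  define M where "M = real m"
  have M1: "M \<ge> 1" using assms by (simp add: M_def)
  have r1: "r - 1 \<noteq> 0" "r + 1 \<noteq> 0" using assms by auto
  have e1: "bbar d r m = (M*(2*M+1)*(-r-1)*(-r)) / (2*(-1)*1)"
    unfolding bbar_def assms(1) by (simp add: M_def of_nat_diff algebra_simps)
  have e2: "cbar d r (Suc m) = ((M+1)*(2*M+1)*(r-1)*r) / (2*(-3)*(-1))"
    unfolding cbar_def assms(1) by (simp add: M_def algebra_simps)
  have e3: "bs d r (d-1) = ((r-1)*(2*M+2)) / (2*3)"
    unfolding bs_def assms(1) using assms(2) by (simp add: M_def of_nat_diff algebra_simps)
  have e4: "cs d r d = ((2*M)*(-r-1)) / (2*1)"
    unfolding cs_def assms(1) by (simp add: M_def algebra_simps)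
  show ?thesis unfolding e1 e2 e3 e4
    apply (rule frac2b)
    using M1 r1 assms(5) by simp_all
qed

lemma W4:
  fixes d m :: nat
  assumes "d = 2*m+1" "-1 < r" "r < 1" "r \<noteq> 0"
  shows "bbar d r m / cbar d r (Suc m) = bs d r (2*m) / cs d r (2*m+1)"
proof -
  define M where "M = real m"
  have M0: "M \<ge> 0" by (simp add: M_def)
  have r1: "r - 1 \<noteq> 0" "r + 1 \<noteq> 0" using assms by auto
  have e1: "bbar d r m = ((M+1)*(2*M+3)*(-r)*(1-r)) / (2*1*3)"
    unfolding bbar_def assms(1) by (simp add: M_def of_nat_diff algebra_simps)
  have e2: "cbar d r (Suc m) = ((M+1)*(2*M+1)*r*(1+r)) / (2*(-1)*1)"
    unfolding cbar_def assms(1) by (simp add: M_def algebra_simps)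
  have e3: "bs d r (2*m) = ((r-1)*(2*M+3)) / (2*3)"
    unfolding bs_def assms(1) by (simp add: M_def algebra_simps)
  have e4: "cs d r (2*m+1) = ((2*M+1)*(-r-1)) / (2*1)"
    unfolding cs_def assms(1) by (simp add: M_def algebra_simps)
  show ?thesis unfolding e1 e2 e3 e4
    apply (rule frac2c)
    using M0 r1 assms(4) apply simp_all
    by algebra
qed

definition K :: "nat \<Rightarrow> real \<Rightarrow> nat \<Rightarrow> real" where
  "K d r i = (\<Prod>l<i. bs d r l) / (\<Prod>l\<in>{1..i}. cs d r l)"

lemma kstar_K: assumes "i \<le> d" "r + s = 0" shows "kstar d r s i = K d r i"
proof -
  have "(\<Prod>l<i. bstar d r s l) = (\<Prod>l<i. bs d r l)"
    by (rule prod.cong) (use assms bstar_eq in auto)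
  moreover have "(\<Prod>l\<in>{1..i}. cstar d r s l) = (\<Prod>l\<in>{1..i}. cs d r l)"
    by (rule prod.cong) (use assms cstar_eq in auto)
  ultimately show ?thesis unfolding kstar_def K_def by simp
qed

lemma K_Suc: "K d r (Suc i) = K d r i * (bs d r i / cs d r (Suc i))"
  unfolding K_def by (simp add: atLeastAtMostSuc_conv field_simps)

lemma kbar_Suc: "kbar d r (Suc j) = kbar d r j * (bbar d r j / cbar d r (Suc j))"
  unfolding kbar_def by (simp add: atLeastAtMostSuc_conv field_simps)

lemma K_0: "K d r 0 = 1" by (simp add: K_def)
lemma kbar_0: "kbar d r 0 = 1" by (simp add: kbar_def)

lemma regime1:
  assumes "-1 < r" "r < 1" "r \<noteq> 0"
  shows "2 * j \<le> d \<Longrightarrow> kbar d r j = K d r (2 * j)"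
proof (induction j)
  case 0 thus ?case by (simp add: K_0 kbar_0)
next
  case (Suc j)
  have "kbar d r (Suc j) = K d r (2*j) * (bbar d r j / cbar d r (Suc j))"
    using Suc by (simp add: kbar_Suc)
  also have "\<dots> = K d r (2*j) * ((bs d r (2*j) / cs d r (2*j+1)) * (bs d r (2*j+1) / cs d r (2*j+2)))"
    using W1[of j d r] Suc.prems assms by simp
  also have "\<dots> = K d r (2 * Suc j)"
    by (simp add: K_Suc mult.assoc)
  finally show ?case .
qed

lemma K_nz:
  assumes "-1 < r" "r < 1" "r \<noteq> 0" "i < d"
  shows "bs d r i \<noteq> 0" "cs d r (Suc i) \<noteq> 0"
proof -
  have a: "real i - real d + r \<noteq> 0" using r_not_int[OF assms(1-3), of "int i - int d"] by (simp add: algebra_simps)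
  have b: "2 * real d - real i + 1 \<noteq> 0" using assms(4) by simp
  have c: "2 * real d - 2 * real i + 1 \<noteq> 0" using assms(4) by simp
  show "bs d r i \<noteq> 0" unfolding bs_def using a b c by simp
  have a2: "real (Suc i) - real d - r - 1 \<noteq> 0" using r_not_int[OF assms(1-3), of "int d - int i"] by (simp add: algebra_simps)
  have c2: "2 * real d - 2 * real (Suc i) + 1 \<noteq> 0" using odd_nz[of "int d - int i - 1"] by (simp add: algebra_simps)
  show "cs d r (Suc i) \<noteq> 0" unfolding cs_def using a2 c2 by simp
qed

lemma regime2:
  assumes "-1 < r" "r < 1" "r \<noteq> 0"
    and "Suc (d div 2) \<le> j"
  shows "j \<le> d \<longrightarrow> kbar d r j = K d r (2 * (d - j) + 1)"
  using assms(4)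
proof (induction j rule: nat_induct_at_least)
  case base
  show ?case
  proof
  assume 2: "Suc (d div 2) \<le> d"
  show "kbar d r (Suc (d div 2)) = K d r (2 * (d - Suc (d div 2)) + 1)"
  proof (cases "even d")
    case True
    then obtain m where dm: "d = 2*m" by blast
    have m1: "m \<ge> 1" using 2 dm by simp
    have j: "Suc (d div 2) = Suc m" using dm by simp
    have "kbar d r (Suc m) = K d r (2*m) * (bbar d r m / cbar d r (Suc m))"
      using regime1[OF assms(1-3), of m d] dm by (simp add: kbar_Suc)
    also have "K d r (2*m) = K d r (d-1) * (bs d r (d-1) / cs d r d)"
      using K_Suc[of d r "d-1"] dm m1 by simp
    finally have "kbar d r (Suc m) = K d r (d-1) * ((bs d r (d-1) / cs d r d) * (bbar d r m / cbar d r (Suc m)))"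
      by (simp add: mult.assoc)
    also have "\<dots> = K d r (d-1)" unfolding W3[OF dm m1 assms(1-3)] by simp
    finally have fin: "kbar d r (Suc m) = K d r (d-1)" .
    have idx: "2 * (d - Suc m) + 1 = d - 1" using dm m1 by simp
    show ?thesis unfolding j idx by (rule fin)
  next
    case False
    then obtain m where dm: "d = 2*m+1" by (metis oddE)
    have j: "Suc (d div 2) = Suc m" using dm by simp
    have "kbar d r (Suc m) = K d r (2*m) * (bbar d r m / cbar d r (Suc m))"
      using regime1[OF assms(1-3), of m d] dm by (simp add: kbar_Suc)
    also have "\<dots> = K d r (2*m) * (bs d r (2*m) / cs d r (2*m+1))" using W4[OF dm assms(1-3)] by simp
    also have "\<dots> = K d r d" using K_Suc[of d r "2*m"] dm by simp
    finally show ?thesis unfolding j using dm by simp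
  qed
  qed
next
  case (Suc j)
  show ?case
  proof
  assume jd0: "Suc j \<le> d"
  have 3: "kbar d r j = K d r (2 * (d - j) + 1)" using Suc jd0 by simp
  have jd: "j + 1 \<le> d" "d < 2*j" using Suc.hyps jd0 by auto
  define i where "i = 2*(d-j-1)+1"
  have i1: "2 * (d - j) + 1 = Suc (Suc i)" using jd by (simp add: i_def)
  have i2: "2 * (d - Suc j) + 1 = i" by (simp add: i_def)
  have "kbar d r (Suc j) = K d r (Suc (Suc i)) * (bbar d r j / cbar d r (Suc j))"
    using 3 i1 by (simp add: kbar_Suc)
  also have "\<dots> = K d r i * ((bs d r i / cs d r (Suc i)) * (bs d r (Suc i) / cs d r (Suc (Suc i))) * (bbar d r j / cbar d r (Suc j)))"
    by (simp add: K_Suc mult.assoc)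
  also have "\<dots> = K d r i" unfolding W2[OF jd assms(1-3) i_def] by simp
  finally show "kbar d r (Suc j) = K d r (2 * (d - Suc j) + 1)" using i2 by simp
  qed
qed



definition PS :: "(nat \<Rightarrow> real) \<Rightarrow> nat \<Rightarrow> real \<Rightarrow> real" where
  "PS c n y = (\<Prod>l<n. c l - y)"

lemma PS_Suc: "PS c (Suc n) y = PS c n y * (c n - y)"
  by (simp add: PS_def)

lemma PS_0: "PS c 0 y = 1" by (simp add: PS_def)

lemma shift_sum:
  fixes f g :: "nat \<Rightarrow> real"
  shows "(\<Sum>n\<le>N. f n * g (Suc n)) = (\<Sum>n\<le>N. (if n = 0 then 0 else f (n-1)) * g n) + f N * g (Suc N)"
  by (induction N) auto

lemma rec_gen:
  fixes a :: "nat \<Rightarrow> nat \<Rightarrow> real"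
  assumes "a i N = 0"
    and "\<And>n. n \<le> N \<Longrightarrow> c n * a i n - (if n = 0 then 0 else a i (n-1))
           = A * a (Suc i) n - (A + C) * a i n + C * a (i-1) n"
  shows "y * (\<Sum>n\<le>N. a i n * PS c n y) = A * (\<Sum>n\<le>N. a (Suc i) n * PS c n y)
          - (A + C) * (\<Sum>n\<le>N. a i n * PS c n y) + C * (\<Sum>n\<le>N. a (i-1) n * PS c n y)"
proof -
  have "y * (\<Sum>n\<le>N. a i n * PS c n y) = (\<Sum>n\<le>N. c n * a i n * PS c n y) - (\<Sum>n\<le>N. a i n * PS c (Suc n) y)"
    by (simp add: sum_distrib_left PS_Suc sum_subtractf[symmetric] algebra_simps)
  also have "(\<Sum>n\<le>N. a i n * PS c (Suc n) y) = (\<Sum>n\<le>N. (if n = 0 then 0 else a i (n-1)) * PS c n y)"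
    using shift_sum[of "a i" "\<lambda>n. PS c n y" N] assms(1) by simp
  also have "(\<Sum>n\<le>N. c n * a i n * PS c n y) - (\<Sum>n\<le>N. (if n = 0 then 0 else a i (n-1)) * PS c n y)
      = (\<Sum>n\<le>N. (c n * a i n - (if n = 0 then 0 else a i (n-1))) * PS c n y)"
    by (simp add: sum_subtractf[symmetric] algebra_simps)
  also have "\<dots> = (\<Sum>n\<le>N. (A * a (Suc i) n - (A + C) * a i n + C * a (i-1) n) * PS c n y)"
    by (rule sum.cong) (simp_all add: assms(2))
  also have "\<dots> = A * (\<Sum>n\<le>N. a (Suc i) n * PS c n y)
          - (A + C) * (\<Sum>n\<le>N. a i n * PS c n y) + C * (\<Sum>n\<le>N. a (i-1) n * PS c n y)"
    by (simp add: sum_distrib_left sum.distrib sum_subtractf algebra_simps)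
  finally show ?thesis .
qed

definition ah :: "nat \<Rightarrow> real \<Rightarrow> nat \<Rightarrow> nat \<Rightarrow> real" where
  "ah d r i n = 4 ^ n * pochhammer (- real i) n / (pochhammer (r - real d) n * pochhammer (- real d) n * fact n)"

definition bh :: "nat \<Rightarrow> real \<Rightarrow> nat \<Rightarrow> nat \<Rightarrow> real" where
  "bh d r i k = pochhammer (- real i) k * pochhammer (real i + r - real d) k
     / (pochhammer (- real d) k * pochhammer ((r - real d) / 2) k * pochhammer ((r - real d + 1) / 2) k * fact k)"

definition cv :: "nat \<Rightarrow> nat \<Rightarrow> real" where "cv d l = real l * (real l - 2 * real d - 1) / 4"
definition cr :: "nat \<Rightarrow> nat \<Rightarrow> real" where "cr d l = real l * (real l - real d - 1/2)"

lemma gen_Suc: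
  fixes F X P1 P2 G F' X' P1' P2' G' x p1 p2 g :: real
  assumes "F' = F*4" "X' = X*x" "P1' = P1*p1" "P2' = P2*p2" "G' = G*g"
  shows "F'*X'/(P1'*P2'*G') = (F*X/(P1*P2*G))*(4*x/(p1*p2*g))"
  unfolding assms by (simp add: divide_inverse inverse_mult_distrib mult_ac)

lemma ah_Suc: "ah d r i (Suc m) = ah d r i m * (4 * (- real i + real m) / ((r - real d + real m) * (- real d + real m) * (real m + 1)))"
  unfolding ah_def by (rule gen_Suc) (simp_all add: pochhammer_Suc fact_Suc algebra_simps)

lemma ah_SucSuc: "ah d r (Suc i) (Suc m) = ah d r i m * (4 * (- real i - 1) / ((r - real d + real m) * (- real d + real m) * (real m + 1)))"
proof -
  have p: "pochhammer (- real (Suc i)) (Suc m) = pochhammer (- real i) m * (- real i - 1)"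
  proof -
    have "pochhammer (- real (Suc i)) (Suc m) = (- real (Suc i)) * pochhammer (- real (Suc i) + 1) m"
      by (rule pochhammer_rec)
    also have "- real (Suc i) + 1 = - real i" by simp
    finally show ?thesis by (simp add: mult.commute)
  qed
  show ?thesis
    unfolding ah_def apply (rule gen_Suc) apply simp apply (rule p)
    by (simp_all add: pochhammer_Suc fact_Suc algebra_simps)
qed

lemma poch_P3: fixes a :: real shows "a * pochhammer (a + 1) (Suc m) = (a + real m) * (a + real m + 1) * pochhammer a m"
proof -
  define P1 where "P1 = pochhammer (a + 1) m"
  define P0 where "P0 = pochhammer a m"
  have h: "a * P1 = (a + real m) * P0"
  proof -
    have "a * P1 = pochhammer a (Suc m)" unfolding P1_def by (rule pochhammer_rec[symmetric])
    also have "\<dots> = (a + real m) * P0" unfolding P0_def by (rule pochhammer_rec')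
    finally show ?thesis .
  qed
  have "a * pochhammer (a + 1) (Suc m) = (a * P1) * (a + 1 + real m)"
    unfolding P1_def pochhammer_Suc by (simp add: mult.assoc)
  also have "\<dots> = (a + real m) * (a + real m + 1) * P0" unfolding h by (simp add: algebra_simps)
  finally show ?thesis unfolding P0_def .
qed

lemma ah_pred:
  assumes "i \<ge> 1"
  shows "(- real i) * ah d r (i-1) (Suc m) = ah d r i m * (4 * ((real m - real i) * (real m - real i + 1)) / ((r - real d + real m) * (- real d + real m) * (real m + 1)))"
proof -
  have e: "- real (i - 1) = - real i + 1" using assms by (simp add: of_nat_diff)
  have p: "(- real i) * pochhammer (- real (i-1)) (Suc m) = pochhammer (- real i) m * ((real m - real i) * (real m - real i + 1))"
    unfolding e using poch_P3[of "- real i" m] by (simp add: algebra_simps)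
  have "(- real i) * ah d r (i-1) (Suc m) = 4 ^ Suc m * ((- real i) * pochhammer (- real (i-1)) (Suc m)) / (pochhammer (r - real d) (Suc m) * pochhammer (- real d) (Suc m) * fact (Suc m))"
    unfolding ah_def by simp
  also have "\<dots> = ah d r i m * (4 * ((real m - real i) * (real m - real i + 1)) / ((r - real d + real m) * (- real d + real m) * (real m + 1)))"
    unfolding ah_def apply (rule gen_Suc) apply simp apply (rule p)
    by (simp_all add: pochhammer_Suc fact_Suc algebra_simps)
  finally show ?thesis .
qed

lemma gen_SucR:
  fixes X Y P1 P2 P3 G X' Y' P1' P2' P3' G' x y p1 p2 p3 g :: real
  assumes "X' = X*x" "Y' = Y*y" "P1' = P1*p1" "P2' = P2*p2" "P3' = P3*p3" "G' = G*g"
  shows "X'*Y'/(P1'*P2'*P3'*G') = (X*Y/(P1*P2*P3*G))*(x*y/(p1*p2*p3*g))"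
  unfolding assms by (simp add: divide_inverse inverse_mult_distrib mult_ac)

lemma pm1: "pochhammer (- real (Suc i)) (Suc m) = pochhammer (- real i) m * (- real i - 1)"
proof -
  have "pochhammer (- real (Suc i)) (Suc m) = (- real (Suc i)) * pochhammer (- real (Suc i) + 1) m"
    by (rule pochhammer_rec)
  also have "- real (Suc i) + 1 = - real i" by simp
  finally show ?thesis by (simp add: mult.commute)
qed

lemma pm2: assumes "i \<ge> 1"
  shows "(- real i) * pochhammer (- real (i-1)) (Suc m) = pochhammer (- real i) m * ((real m - real i) * (real m - real i + 1))"
proof -
  have e: "- real (i - 1) = - real i + 1" using assms by (simp add: of_nat_diff)
  show ?thesis unfolding e using poch_P3[of "- real i" m] by (simp add: algebra_simps)
qed

lemma pm3: "(real i + r - real d) * pochhammer (real (Suc i) + r - real d) (Suc m)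
   = pochhammer (real i + r - real d) m * ((real i + r - real d + real m) * (real i + r - real d + real m + 1))"
proof -
  have e: "real (Suc i) + r - real d = (real i + r - real d) + 1" by simp
  show ?thesis unfolding e using poch_P3[of "real i + r - real d" m] by (simp only: mult.commute mult.left_commute)
qed

lemma pm4: assumes "i \<ge> 1"
  shows "pochhammer (real (i-1) + r - real d) (Suc m) = pochhammer (real i + r - real d) m * (real i + r - real d - 1)"
proof -
  define a where "a = real i + r - real d"
  have e: "real (i-1) + r - real d = a - 1" using assms by (simp add: a_def of_nat_diff)
  have "pochhammer (a - 1) (Suc m) = (a - 1) * pochhammer (a - 1 + 1) m"
    by (rule pochhammer_rec)
  thus ?thesis unfolding e a_def[symmetric] by (simp add: mult.commute)
qed

definition Eb :: "nat \<Rightarrow> real \<Rightarrow> nat \<Rightarrow> real" where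
  "Eb d r m = (- real d + real m) * ((r - real d) / 2 + real m) * ((r - real d + 1) / 2 + real m) * (real m + 1)"

lemma bh_Suc: "bh d r i (Suc m) = bh d r i m * ((- real i + real m) * (real i + r - real d + real m) / Eb d r m)"
  unfolding bh_def Eb_def by (rule gen_SucR) (simp_all add: pochhammer_Suc fact_Suc algebra_simps)

lemma bh_SucSuc: "(real i + r - real d) * bh d r (Suc i) (Suc m) = bh d r i m * ((- real i - 1) * ((real i + r - real d + real m) * (real i + r - real d + real m + 1)) / Eb d r m)"
proof -
  have "(real i + r - real d) * bh d r (Suc i) (Suc m) = pochhammer (- real (Suc i)) (Suc m) * ((real i + r - real d) * pochhammer (real (Suc i) + r - real d) (Suc m))
     / (pochhammer (- real d) (Suc m) * pochhammer ((r - real d) / 2) (Suc m) * pochhammer ((r - real d + 1) / 2) (Suc m) * fact (Suc m))"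
    unfolding bh_def by simp
  also have "\<dots> = bh d r i m * ((- real i - 1) * ((real i + r - real d + real m) * (real i + r - real d + real m + 1)) / Eb d r m)"
    unfolding bh_def Eb_def apply (rule gen_SucR) apply (rule pm1) apply (rule pm3)
    by (simp_all add: pochhammer_Suc fact_Suc algebra_simps)
  finally show ?thesis .
qed

lemma bh_pred: assumes "i \<ge> 1"
  shows "(- real i) * bh d r (i-1) (Suc m) = bh d r i m * (((real m - real i) * (real m - real i + 1)) * (real i + r - real d - 1) / Eb d r m)"
proof -
  have e: "real (i - 1) + r - real d = real (i-1) + r - real d" by simp
  have "(- real i) * bh d r (i-1) (Suc m) = ((- real i) * pochhammer (- real (i-1)) (Suc m)) * pochhammer (real (i-1) + r - real d) (Suc m)
     / (pochhammer (- real d) (Suc m) * pochhammer ((r - real d) / 2) (Suc m) * pochhammer ((r - real d + 1) / 2) (Suc m) * fact (Suc m))"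
    unfolding bh_def by simp
  also have "\<dots> = bh d r i m * (((real m - real i) * (real m - real i + 1)) * (real i + r - real d - 1) / Eb d r m)"
    unfolding bh_def Eb_def apply (rule gen_SucR) apply (rule pm2[OF assms]) apply (rule pm4[OF assms])
    by (simp_all add: pochhammer_Suc fact_Suc algebra_simps)
  finally show ?thesis .
qed

definition Ac :: "nat \<Rightarrow> real \<Rightarrow> nat \<Rightarrow> real" where "Ac d r i = (real i - real d) * (real i + r - real d) / 4"
definition Cc :: "real \<Rightarrow> nat \<Rightarrow> real" where "Cc r i = real i * (real i + r) / 4"

lemma comb:
  fixes Q Y c1 c2 c3 c4 n1 n2 n4 :: real
  assumes "Q \<noteq> 0" "c1 * n1 - Q = c2 * n2 - c3 * n1 + c4 * n4"
  shows "c1 * (Y * (n1 / Q)) - Y = c2 * (Y * (n2 / Q)) - c3 * (Y * (n1 / Q)) + c4 * (Y * (n4 / Q))"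
proof -
  have "c1 * (Y * (n1 / Q)) - Y = Y * (c1 * n1 - Q) / Q" using assms(1) by (simp add: field_simps)
  also have "\<dots> = Y * (c2 * n2 - c3 * n1 + c4 * n4) / Q" using assms(2) by simp
  also have "\<dots> = c2 * (Y * (n2 / Q)) - c3 * (Y * (n1 / Q)) + c4 * (Y * (n4 / Q))" using assms(1) by (simp add: field_simps)
  finally show ?thesis .
qed

lemma DH_alg:
  fixes i m d r Y :: real
  assumes "r - d + m \<noteq> 0" "- d + m \<noteq> 0" "m + 1 \<noteq> 0"
  shows "(m + 1) * ((m + 1) - 2 * d - 1) / 4 * (Y * (4 * (- i + m) / ((r - d + m) * (- d + m) * (m + 1)))) - Y
    = (i - d) * (i + r - d) / 4 * (Y * (4 * (- i - 1) / ((r - d + m) * (- d + m) * (m + 1))))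
      - ((i - d) * (i + r - d) / 4 + i * (i + r) / 4) * (Y * (4 * (- i + m) / ((r - d + m) * (- d + m) * (m + 1))))
      + (- (i + r) / 4) * (Y * (4 * ((m - i) * (m - i + 1)) / ((r - d + m) * (- d + m) * (m + 1))))"
  apply (rule comb)
  using assms apply simp
  by (simp add: field_simps)

lemma R_alg:
  fixes i m d r Y :: real
  assumes "- d + m \<noteq> 0" "(r - d) / 2 + m \<noteq> 0" "(r - d + 1) / 2 + m \<noteq> 0" "m + 1 \<noteq> 0"
  shows "(m + 1) * ((m + 1) - d - 1/2) * (Y * ((- i + m) * (i + r - d + m) / ((- d + m) * ((r - d) / 2 + m) * ((r - d + 1) / 2 + m) * (m + 1)))) - Y
    = (i - d) / 4 * (Y * ((- i - 1) * ((i + r - d + m) * (i + r - d + m + 1)) / ((- d + m) * ((r - d) / 2 + m) * ((r - d + 1) / 2 + m) * (m + 1))))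
      - ((i - d) * (i + r - d) / 4 + i * (i + r) / 4) * (Y * ((- i + m) * (i + r - d + m) / ((- d + m) * ((r - d) / 2 + m) * ((r - d + 1) / 2 + m) * (m + 1))))
      + (- (i + r) / 4) * (Y * (((m - i) * (m - i + 1)) * (i + r - d - 1) / ((- d + m) * ((r - d) / 2 + m) * ((r - d + 1) / 2 + m) * (m + 1))))"
  apply (rule comb)
  using assms apply simp
  by (simp add: field_simps)

lemma ah_0: "ah d r i 0 = 1" by (simp add: ah_def)
lemma bh_0: "bh d r i 0 = 1" by (simp add: bh_def)
lemma ah_over: "ah d r i (Suc d) = 0"
  unfolding ah_def using pochhammer_of_nat_eq_0_lemma[of d "Suc d", where 'a=real] by simp
lemma bh_over: "bh d r i (Suc d) = 0"
  unfolding bh_def using pochhammer_of_nat_eq_0_lemma[of d "Suc d", where 'a=real] by simp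
lemma ah_zero: "i < n \<Longrightarrow> ah d r i n = 0"
  unfolding ah_def using pochhammer_of_nat_eq_0_lemma[of i n, where 'a=real] by simp
lemma bh_zero: "i < n \<Longrightarrow> bh d r i n = 0"
  unfolding bh_def using pochhammer_of_nat_eq_0_lemma[of i n, where 'a=real] by simp

lemma ah_pred':
  "Cc r i * ah d r (i-1) (Suc m) = (- (real i + r) / 4) * (ah d r i m * (4 * ((real m - real i) * (real m - real i + 1)) / ((r - real d + real m) * (- real d + real m) * (real m + 1))))"
proof (cases "i \<ge> 1")
  case True
  have h: "Cc r i * ah d r (i-1) (Suc m) = (- (real i + r) / 4) * ((- real i) * ah d r (i-1) (Suc m))"
    by (simp add: Cc_def field_simps)
  show ?thesis by (subst h, subst ah_pred[OF True], rule refl)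
next
  case False
  hence i0: "i = 0" by simp
  show ?thesis
  proof (cases m)
    case 0 thus ?thesis using i0 by (simp add: Cc_def)
  next
    case (Suc k) thus ?thesis using i0 ah_zero[of 0 m d r] by (simp add: Cc_def)
  qed
qed

lemma bh_pred':
  "Cc r i * bh d r (i-1) (Suc m) = (- (real i + r) / 4) * (bh d r i m * (((real m - real i) * (real m - real i + 1)) * (real i + r - real d - 1) / Eb d r m))"
proof (cases "i \<ge> 1")
  case True
  have h: "Cc r i * bh d r (i-1) (Suc m) = (- (real i + r) / 4) * ((- real i) * bh d r (i-1) (Suc m))"
    by (simp add: Cc_def field_simps)
  show ?thesis by (subst h, subst bh_pred[OF True], rule refl)
next
  case False
  hence i0: "i = 0" by simp
  show ?thesis
  proof (cases m)
    case 0 thus ?thesis using i0 by (simp add: Cc_def)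
  next
    case (Suc k) thus ?thesis using i0 bh_zero[of 0 m d r] by (simp add: Cc_def)
  qed
qed

lemma bh_SucSuc': "Ac d r i * bh d r (Suc i) (Suc m) = (real i - real d) / 4 * (bh d r i m * ((- real i - 1) * ((real i + r - real d + real m) * (real i + r - real d + real m + 1)) / Eb d r m))"
proof -
  have h: "Ac d r i * bh d r (Suc i) (Suc m) = (real i - real d) / 4 * ((real i + r - real d) * bh d r (Suc i) (Suc m))"
    by (simp add: Ac_def field_simps)
  show ?thesis by (subst h, subst bh_SucSuc, rule refl)
qed

lemma termwise_ah:
  assumes "-1 < r" "r < 1" "r \<noteq> 0" "i < d" "n \<le> Suc d"
  shows "cv d n * ah d r i n - (if n = 0 then 0 else ah d r i (n-1))
     = Ac d r i * ah d r (Suc i) n - (Ac d r i + Cc r i) * ah d r i n + Cc r i * ah d r (i-1) n"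
proof (cases n)
  case 0 thus ?thesis by (simp add: ah_0 cv_def Ac_def Cc_def algebra_simps)
next
  case (Suc m)
  show ?thesis
  proof (cases "m = d")
    case True
    thus ?thesis using Suc ah_over ah_zero[of i d d r] assms(4) by simp
  next
    case False
    hence md: "m < d" using Suc assms(5) by simp
    have n1: "r - real d + real m \<noteq> 0" using r_not_int[OF assms(1-3), of "int m - int d"] by simp
    have n2: "- real d + real m \<noteq> 0" using md by simp
    have n3: "real m + 1 \<noteq> 0" by simp
    have cvS: "cv d (Suc m) = (real m + 1) * ((real m + 1) - 2 * real d - 1) / 4" by (simp add: cv_def)
    have AS: "Ac d r i * ah d r (Suc i) (Suc m) = (real i - real d) * (real i + r - real d) / 4 * ah d r (Suc i) (Suc m)"
      by (simp add: Ac_def)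
    have AC: "Ac d r i + Cc r i = (real i - real d) * (real i + r - real d) / 4 + real i * (real i + r) / 4"
      by (simp add: Ac_def Cc_def)
    have t0: "(if Suc m = 0 then 0 else ah d r i (Suc m - 1)) = ah d r i m" by simp
    note t1 = ah_SucSuc[of d r i m]
    note t2 = ah_pred'[of r i d m]
    note t3 = ah_Suc[of d r i m]
    show ?thesis unfolding Suc cvS t0 unfolding t2 unfolding t1 t3 unfolding Ac_def Cc_def
      by (rule DH_alg[OF n1 n2 n3])
  qed
qed

lemma termwise_bh:
  assumes "-1 < r" "r < 1" "r \<noteq> 0" "i < d" "n \<le> Suc d"
  shows "cr d n * bh d r i n - (if n = 0 then 0 else bh d r i (n-1))
     = Ac d r i * bh d r (Suc i) n - (Ac d r i + Cc r i) * bh d r i n + Cc r i * bh d r (i-1) n"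
proof (cases n)
  case 0 thus ?thesis by (simp add: bh_0 cr_def Ac_def Cc_def algebra_simps)
next
  case (Suc m)
  show ?thesis
  proof (cases "m = d")
    case True
    thus ?thesis using Suc bh_over bh_zero[of i d d r] assms(4) by simp
  next
    case False
    hence md: "m < d" using Suc assms(5) by simp
    have n1: "- real d + real m \<noteq> 0" using md by simp
    have n2: "(r - real d) / 2 + real m \<noteq> 0" using r_not_int[OF assms(1-3), of "2 * int m - int d"] by (simp add: field_simps)
    have n3: "(r - real d + 1) / 2 + real m \<noteq> 0" using r_not_int[OF assms(1-3), of "2 * int m - int d + 1"] by (simp add: field_simps)
    have n4: "real m + 1 \<noteq> 0" by simp
    have crS: "cr d (Suc m) = (real m + 1) * ((real m + 1) - real d - 1/2)" by (simp add: cr_def)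
    have AC: "Ac d r i + Cc r i = (real i - real d) * (real i + r - real d) / 4 + real i * (real i + r) / 4"
      by (simp add: Ac_def Cc_def)
    have t0: "(if Suc m = 0 then 0 else bh d r i (Suc m - 1)) = bh d r i m" by simp
    note t1 = bh_SucSuc'[of d r i m]
    note t2 = bh_pred'[of r i d m]
    note t3 = bh_Suc[of d r i m]
    show ?thesis unfolding Suc crS t0 unfolding t1 t2 unfolding t3 unfolding Ac_def Cc_def Eb_def
      by (rule R_alg[OF n1 n2 n3 n4])
  qed
qed

definition VH :: "nat \<Rightarrow> real \<Rightarrow> nat \<Rightarrow> real \<Rightarrow> real" where
  "VH d r i y = (\<Sum>n\<le>Suc d. ah d r i n * PS (cv d) n y)"
definition RH :: "nat \<Rightarrow> real \<Rightarrow> nat \<Rightarrow> real \<Rightarrow> real" where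
  "RH d r i y = (\<Sum>n\<le>Suc d. bh d r i n * PS (cr d) n y)"

lemma VH_rec:
  assumes "-1 < r" "r < 1" "r \<noteq> 0" "i < d"
  shows "y * VH d r i y = Ac d r i * VH d r (Suc i) y - (Ac d r i + Cc r i) * VH d r i y + Cc r i * VH d r (i-1) y"
  unfolding VH_def
  by (rule rec_gen[where a = "ah d r"], simp add: ah_over, rule termwise_ah[OF assms], assumption)

lemma RH_rec:
  assumes "-1 < r" "r < 1" "r \<noteq> 0" "i < d"
  shows "y * RH d r i y = Ac d r i * RH d r (Suc i) y - (Ac d r i + Cc r i) * RH d r i y + Cc r i * RH d r (i-1) y"
  unfolding RH_def
  by (rule rec_gen[where a = "bh d r"], simp add: bh_over, rule termwise_bh[OF assms], assumption)

lemma VH_0: "VH d r 0 y = 1"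
  unfolding VH_def sum.atMost_Suc_shift by (simp add: ah_0 PS_0 ah_zero)

lemma RH_0: "RH d r 0 y = 1"
  unfolding RH_def sum.atMost_Suc_shift by (simp add: bh_0 PS_0 bh_zero)

lemma VH_RH:
  assumes "-1 < r" "r < 1" "r \<noteq> 0"
  shows "i \<le> d \<Longrightarrow> VH d r i y = RH d r i y"
proof (induction i rule: less_induct)
  case (less i)
  show ?case
  proof (cases i)
    case 0 thus ?thesis by (simp add: VH_0 RH_0)
  next
    case (Suc k)
    have kd: "k < d" using less.prems Suc by simp
    have IH1: "VH d r k y = RH d r k y" using less.IH[of k] Suc kd by simp
    have IH2: "VH d r (k-1) y = RH d r (k-1) y" using less.IH[of "k-1"] Suc kd by simp
    have Anz: "Ac d r k \<noteq> 0"
      using kd r_not_int[OF assms, of "int k - int d"] by (simp add: Ac_def)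
    have "Ac d r k * VH d r (Suc k) y = y * VH d r k y + (Ac d r k + Cc r k) * VH d r k y - Cc r k * VH d r (k-1) y"
      using VH_rec[OF assms kd, of y] by simp
    also have "\<dots> = y * RH d r k y + (Ac d r k + Cc r k) * RH d r k y - Cc r k * RH d r (k-1) y"
      by (simp only: IH1 IH2)
    also have "\<dots> = Ac d r k * RH d r (Suc k) y"
      using RH_rec[OF assms kd, of y] by simp
    finally show ?thesis using Anz Suc by simp
  qed
qed

definition th :: "nat \<Rightarrow> nat \<Rightarrow> real" where "th d l = (real d - real l) * (real d - real l + 1)"
definition ah0 :: "nat \<Rightarrow> real \<Rightarrow> nat \<Rightarrow> nat \<Rightarrow> real" where
  "ah0 d r i n = pochhammer (- real i) n / (pochhammer (r - real d) n * pochhammer (- real d) n * fact n)"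
definition DHp :: "nat \<Rightarrow> real \<Rightarrow> nat \<Rightarrow> real poly" where
  "DHp d r i = (\<Sum>n\<le>i. smult (ah0 d r i n) (\<Prod>l<n. [:th d l, -1:]))"

lemma poly_DHp: "poly (DHp d r i) x = (\<Sum>n\<le>i. ah0 d r i n * (\<Prod>l<n. th d l - x))"
  by (simp add: DHp_def poly_sum poly_prod)

lemma degree_DHp: "degree (DHp d r i) \<le> i"
  unfolding DHp_def
proof (rule degree_sum_le)
  fix n assume "n \<in> {..i}"
  hence ni: "n \<le> i" by simp
  have "degree (smult (ah0 d r i n) (\<Prod>l<n. [:th d l, -1:])) \<le> degree (\<Prod>l<n. [:th d l, -1:]::real poly)"
    by (rule degree_smult_le)
  also have "\<dots> \<le> sum (degree \<circ> (\<lambda>l. [:th d l, -1:]::real poly)) {..<n}"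
    by (rule degree_prod_sum_le) simp
  also have "\<dots> = n" by simp
  finally show "degree (smult (ah0 d r i n) (\<Prod>l<n. [:th d l, -1:])) \<le> i" using ni by simp
qed simp

lemma theta_th: "j \<le> d \<Longrightarrow> r + s = 0 \<Longrightarrow> theta d r s j = th d j"
  by (simp add: theta_def th_def of_nat_diff)

lemma prod_theta:
  assumes "j \<le> d" "r + s = 0"
  shows "(\<Prod>l<n. th d l - theta d r s j) = pochhammer (- real j) n * pochhammer (real j - r - s - 2 * real d - 1) n"
proof -
  have "pochhammer (- real j) n * pochhammer (real j - r - s - 2 * real d - 1) n
      = (\<Prod>l<n. (- real j + real l) * (real j - r - s - 2 * real d - 1 + real l))"
    by (simp add: pochhammer_prod atLeast0LessThan prod.distrib)
  also have "\<dots> = (\<Prod>l<n. th d l - theta d r s j)"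
    by (rule prod.cong) (use assms in \<open>simp_all add: theta_th th_def algebra_simps\<close>)
  finally show ?thesis by simp
qed

lemma DHp_theta:
  assumes "j \<le> d" "r + s = 0"
  shows "poly (DHp d r i) (theta d r s j) = dual_hahn_val d r s i j"
proof -
  have ms: "- s - real d = r - real d" using assms by simp
  show ?thesis
    unfolding poly_DHp dual_hahn_val_def hyp3F2_def prod_theta[OF assms] ms
    by (rule sum.cong) (simp_all add: ah0_def)
qed

lemma interp_unique:
  fixes p q :: "real poly" and t :: "nat \<Rightarrow> real"
  assumes "degree p \<le> d" "degree q \<le> d" "inj_on t {..d}" "\<forall>j\<le>d. poly p (t j) = poly q (t j)"
  shows "p = q"
proof (rule ccontr)
  assume "p \<noteq> q"
  hence nz: "p - q \<noteq> 0" by simp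
  have sub: "t ` {..d} \<subseteq> {x. poly (p - q) x = 0}" using assms(4) by auto
  have "Suc d = card (t ` {..d})" using card_image[OF assms(3)] by simp
  also have "\<dots> \<le> card {x. poly (p - q) x = 0}"
    by (rule card_mono[OF poly_roots_finite[OF nz] sub])
  also have "\<dots> \<le> degree (p - q)" by (rule card_poly_roots_bound[OF nz])
  also have "\<dots> \<le> d" using assms(1,2) degree_diff_le by blast
  finally show False by simp
qed

lemma theta_inj: assumes "r + s = 0" shows "inj_on (theta d r s) {..d}"
proof (rule inj_onI)
  fix j k assume j: "j \<in> {..d}" and k: "k \<in> {..d}" and e: "theta d r s j = theta d r s k"
  define a where "a = real d - real j"
  define b where "b = real d - real k"
  have a0: "a \<ge> 0" "b \<ge> 0" using j k by (auto simp: a_def b_def)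
  have "a * (a + 1) = b * (b + 1)" using e j k assms by (simp add: theta_th th_def a_def b_def)
  hence "(a - b) * (a + b + 1) = 0" by (simp add: algebra_simps)
  hence "a = b" using a0 by simp
  thus "j = k" by (simp add: a_def b_def)
qed

lemma dual_hahn_eq:
  assumes "i \<le> d" "r + s = 0"
  shows "dual_hahn d r s i = DHp d r i"
  unfolding dual_hahn_def
proof (rule the_equality)
  show "degree (DHp d r i) \<le> d \<and> (\<forall>j\<le>d. poly (DHp d r i) (theta d r s j) = dual_hahn_val d r s i j)"
    using degree_DHp[of d r i] assms DHp_theta[OF _ assms(2)] by auto
  fix p assume p: "degree p \<le> d \<and> (\<forall>j\<le>d. poly p (theta d r s j) = dual_hahn_val d r s i j)"
  show "p = DHp d r i"
    by (rule interp_unique[of p d _ "theta d r s"]) (use p assms degree_DHp[of d r i] theta_inj[OF assms(2)] DHp_theta[OF _ assms(2)] in auto)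
qed

lemma sum_ext:
  fixes f :: "nat \<Rightarrow> real"
  assumes "i \<le> N" "\<And>n. i < n \<Longrightarrow> f n = 0"
  shows "(\<Sum>n\<le>i. f n) = (\<Sum>n\<le>N. f n)"
  by (rule sum.mono_neutral_left) (use assms in auto)

lemma pcomp_eval:
  assumes "i \<le> d" "r + s = 0"
  shows "poly (pcompose (dual_hahn d r s i) [: real d * (real d + 1), 4 :]) y = VH d r i y"
proof -
  have pr: "(\<Prod>l<n. th d l - (real d * (real d + 1) + y * 4)) = 4 ^ n * PS (cv d) n y" for n
  proof -
    have "(\<Prod>l<n. th d l - (real d * (real d + 1) + y * 4)) = (\<Prod>l<n. 4 * (cv d l - y))"
      by (rule prod.cong) (simp_all add: th_def cv_def algebra_simps)
    also have "\<dots> = 4 ^ n * PS (cv d) n y" by (simp only: prod.distrib PS_def) simp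
    finally show ?thesis .
  qed
  have "poly (pcompose (dual_hahn d r s i) [: real d * (real d + 1), 4 :]) y
      = (\<Sum>n\<le>i. ah0 d r i n * (\<Prod>l<n. th d l - (real d * (real d + 1) + y * 4)))"
    unfolding dual_hahn_eq[OF assms] poly_pcompose poly_DHp by simp
  also have "\<dots> = (\<Sum>n\<le>i. ah d r i n * PS (cv d) n y)"
    unfolding pr by (rule sum.cong) (simp_all add: ah0_def ah_def)
  also have "\<dots> = VH d r i y"
    unfolding VH_def by (rule sum_ext) (use assms in \<open>auto simp: ah_zero\<close>)
  finally show ?thesis .
qed

lemma racah_eval:
  assumes "i \<le> d"
  shows "poly (racah_poly (- real d - 1) r ((r - real d - 1) / 2) (- (r + real d) / 2 - 1) i) y = RH d r i y"
proof -
  have e1: "real i + (- real d - 1) + r + 1 = real i + r - real d" by simp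
  have e2: "- real d - 1 + 1 = - real d" by simp
  have e3: "r + (- (r + real d) / 2 - 1) + 1 = (r - real d) / 2" by (simp add: field_simps)
  have e4: "(r - real d - 1) / 2 + 1 = (r - real d + 1) / 2" by (simp add: field_simps)
  have e5: "real l * (real l + (r - real d - 1) / 2 + (- (r + real d) / 2 - 1) + 1) = cr d l" for l
    by (simp add: cr_def field_simps)
  have "poly (racah_poly (- real d - 1) r ((r - real d - 1) / 2) (- (r + real d) / 2 - 1) i) y
     = (\<Sum>k\<le>i. bh d r i k * PS (cr d) k y)"
    unfolding racah_poly_def poly_sum e1 e2 e3 e4 e5
    by (rule sum.cong) (simp_all add: poly_prod PS_def bh_def)
  also have "\<dots> = RH d r i y"
    unfolding RH_def by (rule sum_ext) (use assms in \<open>auto simp: bh_zero\<close>)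
  finally show ?thesis .
qed


lemma fb_eq:
  fixes d j :: nat and r :: real
  shows "4 * real j * (real j + (r - real d - 1) / 2 + (- (r + real d) / 2 - 1) + 1) + real d * (real d + 1)
     = (real d - 2 * real j) * (real d - 2 * real j + 1)"
  by (simp add: field_simps)

lemma theta_even:
  assumes "2 * j \<le> d" "r + s = 0"
  shows "theta d r s (2 * j) = (real d - 2 * real j) * (real d - 2 * real j + 1)"
  using assms by (simp add: theta_def of_nat_diff)

lemma theta_odd:
  assumes "d div 2 < j" "j \<le> d" "r + s = 0"
  shows "theta d r s (2 * (d - j) + 1) = (real d - 2 * real j) * (real d - 2 * real j + 1)"
proof -
  have h: "2 * (d - j) + 1 \<le> d" using assms(1,2) by linarith
  have e: "real (d - (2 * (d - j) + 1)) = 2 * real j - real d - 1" using h assms(2) by (simp add: of_nat_diff)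
  have sr: "s = - r" using assms(3) by simp
  show ?thesis unfolding theta_def e sr by (simp add: algebra_simps)
qed

theorem theorem1p4:
  fixes d :: nat and r s :: real
  assumes "r > -1" and "s > -1" and "r \<noteq> 0" and "r + s = 0"
  defines "\<alpha> \<equiv> - real d - 1"
      and "\<beta> \<equiv> r"
      and "\<gamma> \<equiv> (r - real d - 1) / 2"
      and "\<delta> \<equiv> - (r + real d) / 2 - 1"
  shows "(\<forall>i\<le>d. pcompose (dual_hahn d r s i) [: real d * (real d + 1), 4 :]
                  = racah_poly \<alpha> \<beta> \<gamma> \<delta> i)
       \<and> (\<forall>j\<le>d. 4 * real j * (real j + \<gamma> + \<delta> + 1) + real d * (real d + 1)
                  = (real d - 2 * real j) * (real d - 2 * real j + 1))
       \<and> (\<forall>j\<le>d div 2. 4 * real j * (real j + \<gamma> + \<delta> + 1) + real d * (real d + 1)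
                  = theta d r s (2 * j))
       \<and> (\<forall>j. d div 2 < j \<and> j \<le> d \<longrightarrow>
              4 * real j * (real j + \<gamma> + \<delta> + 1) + real d * (real d + 1)
                  = theta d r s (2 * (d - j) + 1))
       \<and> (\<lambda>j. 4 * real j * (real j + \<gamma> + \<delta> + 1) + real d * (real d + 1)) ` {0..d}
            = theta d r s ` {0..d}
       \<and> (\<forall>j\<le>d div 2. kbar d r j = kstar d r s (2 * j))
       \<and> (\<forall>j. d div 2 < j \<and> j \<le> d \<longrightarrow> kbar d r j = kstar d r s (2 * (d - j) + 1))"
proof -
  have r1: "r < 1" using assms(2,4) by linarith
  note rc = assms(1) r1 assms(3)
  define f where "f j = 4 * real j * (real j + \<gamma> + \<delta> + 1) + real d * (real d + 1)" for j :: nat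
  have fj: "f j = (real d - 2 * real j) * (real d - 2 * real j + 1)" for j
    unfolding f_def \<gamma>_def \<delta>_def by (rule fb_eq)
  have A: "\<forall>i\<le>d. pcompose (dual_hahn d r s i) [: real d * (real d + 1), 4 :] = racah_poly \<alpha> \<beta> \<gamma> \<delta> i"
  proof (intro allI impI)
    fix i assume i: "i \<le> d"
    show "pcompose (dual_hahn d r s i) [: real d * (real d + 1), 4 :] = racah_poly \<alpha> \<beta> \<gamma> \<delta> i"
      unfolding poly_eq_poly_eq_iff[symmetric] \<alpha>_def \<beta>_def \<gamma>_def \<delta>_def
    proof
      fix y
      show "poly (pcompose (dual_hahn d r s i) [: real d * (real d + 1), 4 :]) y
          = poly (racah_poly (- real d - 1) r ((r - real d - 1) / 2) (- (r + real d) / 2 - 1) i) y"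
        unfolding pcomp_eval[OF i assms(4)] racah_eval[OF i] using VH_RH[OF rc i] .
    qed
  qed
  have B1: "\<forall>j\<le>d. f j = (real d - 2 * real j) * (real d - 2 * real j + 1)" using fj by simp
  have B2: "\<forall>j\<le>d div 2. f j = theta d r s (2 * j)"
  proof (intro allI impI)
    fix j assume "j \<le> d div 2"
    hence "2 * j \<le> d" by linarith
    thus "f j = theta d r s (2 * j)" using theta_even[OF _ assms(4)] fj by simp
  qed
  have B3: "\<forall>j. d div 2 < j \<and> j \<le> d \<longrightarrow> f j = theta d r s (2 * (d - j) + 1)"
    using theta_odd[OF _ _ assms(4)] fj by simp
  have B4: "f ` {0..d} = theta d r s ` {0..d}"
  proof
    show "f ` {0..d} \<subseteq> theta d r s ` {0..d}"
    proof
      fix x assume "x \<in> f ` {0..d}"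
      then obtain j where j: "j \<le> d" "x = f j" by auto
      show "x \<in> theta d r s ` {0..d}"
      proof (cases "j \<le> d div 2")
        case True
        hence "2 * j \<le> d" by linarith
        thus ?thesis using B2 True j by force
      next
        case False
        hence "2 * (d - j) + 1 \<le> d" using j by linarith
        thus ?thesis using B3 False j by force
      qed
    qed
    show "theta d r s ` {0..d} \<subseteq> f ` {0..d}"
    proof
      fix x assume "x \<in> theta d r s ` {0..d}"
      then obtain i where i: "i \<le> d" "x = theta d r s i" by auto
      show "x \<in> f ` {0..d}"
      proof (cases "even i")
        case True
        then obtain j where ij: "i = 2 * j" by blast
        have "j \<le> d div 2" using i ij by linarith
        hence "f j = x" using B2 i ij by simp
        moreover have "j \<in> {0..d}" using i ij by simp
        ultimately show ?thesis by blast
      next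
        case False
        then obtain k where ik: "i = 2 * k + 1" by (metis oddE)
        define j where "j = d - k"
        have c: "d div 2 < j" "j \<le> d" using i ik by (simp_all add: j_def)
        have "2 * (d - j) + 1 = i" using i ik by (simp add: j_def)
        hence "f j = x" using B3 c i by auto
        moreover have "j \<in> {0..d}" using c by simp
        ultimately show ?thesis by blast
      qed
    qed
  qed
  have C1: "\<forall>j\<le>d div 2. kbar d r j = kstar d r s (2 * j)"
  proof (intro allI impI)
    fix j assume "j \<le> d div 2"
    hence j2: "2 * j \<le> d" by linarith
    show "kbar d r j = kstar d r s (2 * j)"
      using regime1[OF rc j2] kstar_K[OF j2 assms(4)] by simp
  qed
  have C2: "\<forall>j. d div 2 < j \<and> j \<le> d \<longrightarrow> kbar d r j = kstar d r s (2 * (d - j) + 1)"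
  proof (intro allI impI)
    fix j assume j: "d div 2 < j \<and> j \<le> d"
    hence j1: "Suc (d div 2) \<le> j" by simp
    have j2: "2 * (d - j) + 1 \<le> d" using j by linarith
    show "kbar d r j = kstar d r s (2 * (d - j) + 1)"
      using regime2[OF rc j1] j kstar_K[OF j2 assms(4)] by simp
  qed
  show ?thesis
    using A B1 B2 B3 B4 C1 C2 unfolding f_def by blast
qed

end
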